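(* Let $S$ and $T$ be valid configurations of $n\ge 2$ points each whose smallest enclosing discs have a common center, placed at the origin. Let $\delta$ be a direction forming an angle of at least $\pi/(24n)$ with every direction in $\Delta_S\cup\Delta_T$, and rotate coordinates so that $\delta$ is the positive $x$-direction. Let $s_1,\dots,s_n=\Pi_\delta(S)$ and $t_1,\dots,t_n=\Pi_\delta(T)$, and let $M_\delta(s_i)=t_i$. Then the translation $\vec v=\bigl((r(S)+r(T)+2)(1+8n),\,0\bigr)$ is valid with respect to $M_\delta$, and moreover the ordering $s_1,\dots,s_n$ yields a valid itinerary from $S$ to $T+\vec v$ with respect to $M_\delta$.
   Context: For $p\in\mathbb R^2$, $D(p)$ is the open unit disc centered at $p$. A configuration is a finite set of points in $\mathbb R^2$; it is valid if any two distinct points are at distance at least $2$. $r(P)$ is the radius of the smallest closed disc containing the point set $P$. Two distinct points $p,q\in S$ are Delaunay neighbors if there is a closed disc whose boundary passes through $p$ and $q$ and whose interior contains no point of $S$. $\Delta_S$ is the set of directions consisting of, for every pair of Delaunay neighbors $s,s'\in S$, the directions of the two common inner tangent lines of $D(s)$ and $D(s')$, each taken with both orientations; $\Delta_T$ is defined analogously. $\Pi_\delta(C)$ orders $C$ by decreasing $x$-coordinate, ties broken by decreasing $y$-coordinate. Given a bijection $M:S\to T$ and translation $\vec v$, an ordering $s_1,\dots,s_n$ of $S$ yields a valid itinerary if for each $i$, $\mathrm{conv}(D(s_i)\cup D(M(s_i)+\vec v))$ is disjoint from $D(s_j)$ for $j>i$ and from $D(M(s_j)+\vec v)$ for $j<i$;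 $\vec v$ is valid w.r.t. $M$ if some ordering yields a valid itinerary. *)

theory Defs
  imports "HOL-Analysis.Analysis"
begin

type_synonym point = "real \<times> real"

definition D :: "point \<Rightarrow> point set" where
  "D p = ball p 1"

definition valid_config :: "point set \<Rightarrow> bool" where
  "valid_config S \<longleftrightarrow> finite S \<and> (\<forall>p\<in>S. \<forall>q\<in>S. p \<noteq> q \<longrightarrow> dist p q \<ge> 2)"

definition rad :: "point set \<Rightarrow> real" where
  "rad P = Inf {\<rho>. \<rho> \<ge> 0 \<and> (\<exists>c. P \<subseteq> cball c \<rho>)}"

definition sed_center :: "point set \<Rightarrow> point \<Rightarrow> bool" where
  "sed_center P c \<longleftrightarrow> P \<subseteq> cball c (rad P)"

definition delaunay_nb :: "point set \<Rightarrow> point \<Rightarrow> point \<Rightarrow> bool" where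
  "delaunay_nb S p q \<longleftrightarrow> p \<in> S \<and> q \<in> S \<and> p \<noteq> q \<and>
     (\<exists>c \<rho>. dist c p = \<rho> \<and> dist c q = \<rho> \<and> ball c \<rho> \<inter> S = {})"

text \<open>2D cross product; for a unit vector u, cross u (p - a) is the signed distance of p
  from the line through a with direction u.\<close>
definition cross :: "point \<Rightarrow> point \<Rightarrow> real" where
  "cross x y = fst x * snd y - snd x * fst y"

text \<open>Directions (unit vectors) of the common inner tangent lines of D(s), D(s') for all
  Delaunay neighbours s, s' of S, in both orientations: the line through a with direction u
  is at distance 1 from both centres, which lie on opposite sides of it.\<close>
definition Delta :: "point set \<Rightarrow> point set" where
  "Delta S = {u. norm u = 1 \<and> (\<exists>s s' a. delaunay_nb S s s' \<and>
      ((cross u (s - a) = 1 \<and> cross u (s' - a) = -1) \<or>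
       (cross u (s - a) = -1 \<and> cross u (s' - a) = 1)))}"

definition dir_angle :: "point \<Rightarrow> point \<Rightarrow> real" where
  "dir_angle u w = arccos (u \<bullet> w)"

text \<open>Rotation by +90 degrees: in coordinates where \<delta> is the positive x-direction,
  perp \<delta> is the positive y-direction.\<close>
definition perp :: "point \<Rightarrow> point" where
  "perp u = (- snd u, fst u)"

definition before :: "point \<Rightarrow> point \<Rightarrow> point \<Rightarrow> bool" where
  "before \<delta> p q \<longleftrightarrow> p \<bullet> \<delta> > q \<bullet> \<delta> \<or> (p \<bullet> \<delta> = q \<bullet> \<delta> \<and> p \<bullet> perp \<delta> > q \<bullet> perp \<delta>)"

definition Pi_ord :: "point \<Rightarrow> point set \<Rightarrow> point list" where
  "Pi_ord \<delta> C = (THE xs. distinct xs \<and> set xs = C \<and> sorted_wrt (before \<delta>) xs)"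

definition M_delta :: "point \<Rightarrow> point set \<Rightarrow> point set \<Rightarrow> point \<Rightarrow> point" where
  "M_delta \<delta> S T s = Pi_ord \<delta> T ! (THE i. i < length (Pi_ord \<delta> S) \<and> Pi_ord \<delta> S ! i = s)"

definition valid_itinerary :: "(point \<Rightarrow> point) \<Rightarrow> point \<Rightarrow> point list \<Rightarrow> bool" where
  "valid_itinerary M v ss \<longleftrightarrow>
     (\<forall>i < length ss. \<forall>j < length ss.
        (i < j \<longrightarrow> convex hull (D (ss ! i) \<union> D (M (ss ! i) + v)) \<inter> D (ss ! j) = {}) \<and>
        (j < i \<longrightarrow> convex hull (D (ss ! i) \<union> D (M (ss ! i) + v)) \<inter> D (M (ss ! j) + v) = {}))"

definition valid_translation :: "point set \<Rightarrow> (point \<Rightarrow> point) \<Rightarrow> point \<Rightarrow> bool" where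
  "valid_translation S M v \<longleftrightarrow>
     (\<exists>ss. distinct ss \<and> set ss = S \<and> valid_itinerary M v ss)"

end

theory Submission
  imports Defs
begin



lemma frame_key:
  fixes a b W1 W2 :: real
  assumes a0: "a \<le> 0" and l4: "a*a + b*b \<ge> 4" and W1: "W1 > 0"
    and dw: "a*W1 + b*W2 > 0" and cr: "(W1*b - W2*a)^2 < 4*(W1^2+W2^2)"
  shows "\<exists>t. 0 \<le> t \<and> t \<le> 1 \<and> (W1*b - t*W2*a)^2 = 4*(W1^2 + t^2*W2^2)"
proof -
  have aW: "a*W1 \<le> 0" using a0 W1 by (simp add: mult_nonpos_nonneg)
  hence bW: "b*W2 > 0" using dw by linarith
  define t0 where "t0 = - (W1*a) / (W2*b)"
  have t00: "0 \<le> t0" unfolding t0_def using bW aW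
    by (simp add: mult.commute divide_nonpos_pos)
  have "-(W1*a) \<le> W2*b" using dw by (simp add: mult.commute)
  hence t01: "t0 \<le> 1" unfolding t0_def using bW
    by (simp add: mult.commute le_divide_eq)
  define g where "g = (\<lambda>t. (W1*b - t*W2*a)^2 - 4*(W1^2 + t^2*W2^2))"
  have lag: "(W1*b - t*W2*a)^2 + (W1*a + t*W2*b)^2 = (W1^2 + t^2*W2^2)*(a*a+b*b)" for t
    by (simp add: power2_eq_square algebra_simps)
  have nz: "W2*b \<noteq> 0" using bW by (metis mult.commute less_irrefl)
  have "t0*(W2*b) = -(W1*a)" unfolding t0_def using nz by simp
  hence "W1*a + t0*W2*b = 0" by (simp add: mult.assoc)
  hence "(W1*b - t0*W2*a)^2 = (W1^2 + t0^2*W2^2)*(a*a+b*b)" using lag[of t0] by simp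
  moreover have "(W1^2 + t0^2*W2^2)*(a*a+b*b) \<ge> (W1^2 + t0^2*W2^2)*4"
    using l4 by (intro mult_left_mono) auto
  ultimately have g0: "g t0 \<ge> 0" unfolding g_def by simp
  have g1: "g 1 \<le> 0" unfolding g_def using cr by simp
  have "continuous_on {t0..1} g" unfolding g_def by (intro continuous_intros)
  from IVT2'[of g 1 0 t0, OF g1 g0 t01 this] obtain t where "t0 \<le> t" "t \<le> 1" "g t = 0" by auto
  thus ?thesis using t00 unfolding g_def by (intro exI[of _ t]) auto
qed

lemma frame_small:
  fixes a b W1 W2 :: real
  assumes a0: "a \<le> 0" and W1: "W1 > 0"
    and dw: "a*W1 + b*W2 > 0" and cr: "(W1*b - W2*a)^2 < 4*(W1^2+W2^2)"
    and sm: "64*W2^2 < W1^2"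
  shows "a*a + b*b < 8"
proof -
  define k where "k = W2/W1"
  have W2: "W2 = k*W1" unfolding k_def using W1 by simp
  have "64*k^2*W1^2 < 1*W1^2" using sm unfolding W2 by (simp add: power_mult_distrib)
  hence k2: "64*k^2 < 1" using W1 by (simp only: mult_less_cancel_right) simp
  have aW: "a*W1 \<le> 0" using a0 W1 by (simp add: mult_nonpos_nonneg)
  hence "b*W2 > 0" using dw by linarith
  hence "(b*k)*W1 > 0" unfolding W2 by (simp add: mult.assoc)
  hence bk: "b*k > 0" using W1 by (simp add: zero_less_mult_iff)
  have e1: "(W1*b - W2*a)^2 = W1^2 * (b-k*a)^2" unfolding W2 by (simp add: power2_eq_square algebra_simps)
  have e2: "4*(W1^2+W2^2) = W1^2 * (4*(1+k^2))" unfolding W2 by (simp add: power2_eq_square algebra_simps)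
  have cr': "(b - k*a)^2 < 4*(1+k^2)" using cr W1 unfolding e1 e2 by simp
  have "b*(k*a) \<le> 0" using bk a0 by (metis mult.assoc mult_nonneg_nonpos less_eq_real_def)
  moreover have "(b-k*a)^2 = b^2 - 2*(b*(k*a)) + (k*a)^2" by (simp add: power2_eq_square algebra_simps)
  moreover have "0 \<le> (k*a)^2" by simp
  ultimately have "b^2 \<le> (b - k*a)^2" by linarith
  hence b2: "b^2 < 4*(1+k^2)" using cr' by simp
  have "(a + b*k)*W1 > 0" using dw unfolding W2 by (simp add: algebra_simps)
  hence "a + b*k > 0" using W1 by (simp add: zero_less_mult_iff)
  hence "-a < b*k" by simp
  hence "(-a)*(-a) \<le> (b*k)*(b*k)" using a0 by (intro mult_mono) auto
  hence "a*a + b*b \<le> b^2*(1+k^2)" by (simp add: power2_eq_square algebra_simps)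
  also have "\<dots> < 4*(1+k^2)*(1+k^2)" using b2 by (intro mult_strict_right_mono) (auto simp: add_pos_nonneg)
  also have "\<dots> \<le> 8"
  proof -
    have "k^2 \<le> 1/64" using k2 by simp
    hence "(1+k^2)*(1+k^2) \<le> (1+1/64)*(1+1/64)" by (intro mult_mono) auto
    hence P: "(1+k^2)*(1+k^2) \<le> 2" by simp
    have "4*(1+k^2)*(1+k^2) = 4*((1+k^2)*(1+k^2))" by (simp only: mult.assoc)
    thus ?thesis using P by linarith
  qed
  finally show ?thesis .
qed



lemma unit_coords: "norm (\<delta>::point) = 1 \<Longrightarrow> fst \<delta> * fst \<delta> + snd \<delta> * snd \<delta> = 1"
proof -
  assume "norm \<delta> = 1"
  hence "\<delta> \<bullet> \<delta> = 1" by (metis norm_eq_sqrt_inner real_sqrt_eq_1_iff)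
  thus ?thesis by (simp add: inner_prod_def)
qed

lemma frame_ids:
  fixes d w \<delta> :: point
  assumes "norm \<delta> = 1"
  shows "d \<bullet> w = (d \<bullet> \<delta>)*(w \<bullet> \<delta>) + cross \<delta> d * cross \<delta> w"
    and "cross w d = (w \<bullet> \<delta>)*cross \<delta> d - cross \<delta> w*(d \<bullet> \<delta>)"
    and "d \<bullet> d = (d \<bullet> \<delta>)*(d \<bullet> \<delta>) + (cross \<delta> d)*(cross \<delta> d)"
proof -
  obtain d1 d2 where d: "d = (d1,d2)" by (cases d)
  obtain w1 w2 where w: "w = (w1,w2)" by (cases w)
  obtain e1 e2 where e: "\<delta> = (e1,e2)" by (cases \<delta>)
  have h: "e1*e1 + e2*e2 = 1" using unit_coords[OF assms] e by simp
  have "(d \<bullet> \<delta>)*(w \<bullet> \<delta>) + cross \<delta> d * cross \<delta> w = (d \<bullet> w) * (e1*e1 + e2*e2)"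
    unfolding d w e by (simp add: inner_prod_def cross_def algebra_simps)
  thus "d \<bullet> w = (d \<bullet> \<delta>)*(w \<bullet> \<delta>) + cross \<delta> d * cross \<delta> w" using h by simp
  have "(w \<bullet> \<delta>)*cross \<delta> d - cross \<delta> w*(d \<bullet> \<delta>) = cross w d * (e1*e1 + e2*e2)"
    unfolding d w e by (simp add: inner_prod_def cross_def algebra_simps)
  thus "cross w d = (w \<bullet> \<delta>)*cross \<delta> d - cross \<delta> w*(d \<bullet> \<delta>)" using h by simp
  have "(d \<bullet> \<delta>)*(d \<bullet> \<delta>) + (cross \<delta> d)*(cross \<delta> d) = (d \<bullet> d) * (e1*e1 + e2*e2)"
    unfolding d e by (simp add: inner_prod_def cross_def algebra_simps)
  thus "d \<bullet> d = (d \<bullet> \<delta>)*(d \<bullet> \<delta>) + (cross \<delta> d)*(cross \<delta> d)" using h by simp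
qed

lemma cross_lin:
  fixes x y z :: point
  shows "cross (c *\<^sub>R x) y = c * cross x y" "cross x (y - z) = cross x y - cross x z"
    "cross x (c *\<^sub>R y) = c * cross x y" "cross (x + y) z = cross x z + cross y z"
    "cross x (-y) = - cross x y" "cross x x = 0"
  by (auto simp: cross_def algebra_simps)

lemma perp_ids:
  fixes \<delta> d :: point
  assumes "norm \<delta> = 1"
  shows "perp \<delta> \<bullet> \<delta> = 0" "cross \<delta> (perp \<delta>) = 1" "cross (perp \<delta>) d = - (d \<bullet> \<delta>)"
    "cross \<delta> \<delta> = 0" "\<delta> \<bullet> \<delta> = 1" "perp \<delta> \<bullet> perp \<delta> = 1"
  using unit_coords[OF assms]
  by (auto simp: perp_def cross_def inner_prod_def algebra_simps)

lemma lagrange_ineq: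
  fixes w y :: point
  shows "(cross w y)^2 \<le> (w \<bullet> w) * (y \<bullet> y)"
proof -
  have "(w \<bullet> w) * (y \<bullet> y) = (cross w y)^2 + (w \<bullet> y)^2"
    by (simp add: inner_prod_def cross_def power2_eq_square algebra_simps)
  thus ?thesis by simp
qed




lemma dist_sq: "(dist (x::point) y)^2 = (fst x - fst y)^2 + (snd x - snd y)^2"
  by (cases x; cases y) (simp add: dist_Pair_Pair dist_real_def)

lemma dist_sq_inner: "(dist (x::point) y)^2 = (x - y) \<bullet> (x - y)"
  by (simp add: dist_norm power2_norm_eq_inner)

lemma delaunay_close:
  assumes vc: "valid_config P" and p0: "p0 \<in> P" and p: "p \<in> P" and ne: "p0 \<noteq> p"
    and cl: "(dist p0 p)^2 < 8"
  shows "delaunay_nb P p0 p"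
proof -
  define c where "c = (1/2) *\<^sub>R (p0 + p)"
  define \<rho> where "\<rho> = dist c p0"
  have "(dist c p)^2 = (dist c p0)^2" unfolding dist_sq c_def by (simp add: algebra_simps power2_eq_square)
  hence cp: "dist c p = \<rho>" unfolding \<rho>_def by (simp add: power2_eq_iff_nonneg)
  have rho2: "4 * \<rho>^2 = (dist p0 p)^2" unfolding \<rho>_def dist_sq c_def by (simp add: algebra_simps power2_eq_square)
  have "ball c \<rho> \<inter> P = {}"
  proof (rule ccontr)
    assume "ball c \<rho> \<inter> P \<noteq> {}"
    then obtain q where q: "q \<in> P" "dist c q < \<rho>" by auto
    have "q \<noteq> p0" using q(2) \<rho>_def by auto
    hence d1: "dist q p0 \<ge> 2" using vc q(1) p0 unfolding valid_config_def by auto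
    have "q \<noteq> p" using q(2) cp by auto
    hence d2: "dist q p \<ge> 2" using vc q(1) p unfolding valid_config_def by auto
    have par: "(dist q p0)^2 + (dist q p)^2 = 2*(dist c q)^2 + 2*\<rho>^2"
      unfolding dist_sq \<rho>_def c_def by (simp add: algebra_simps power2_eq_square)
    have "(dist c q)^2 < \<rho>^2" using q(2) by (simp add: power_strict_mono)
    moreover have "(dist q p0)^2 \<ge> 4" "(dist q p)^2 \<ge> 4"
      using d1 d2 power_mono[of 2 _ 2] by force+
    ultimately show False using par rho2 cl by linarith
  qed
  thus ?thesis unfolding delaunay_nb_def using p0 p ne cp \<rho>_def
    by (intro conjI exI[of _ c] exI[of _ \<rho>]) (auto simp: dist_commute)
qed

lemma in_Delta:
  assumes dn: "delaunay_nb P p0 p" and u: "norm u = 1"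
    and cr: "cross u (p - p0) = 2 \<or> cross u (p - p0) = -2"
  shows "u \<in> Delta P"
proof -
  define m where "m = (1/2) *\<^sub>R (p0 + p)"
  have e1: "cross u (p0 - m) = - cross u (p - p0) / 2" unfolding m_def by (simp add: cross_def algebra_simps)
  have e2: "cross u (p - m) = cross u (p - p0) / 2" unfolding m_def by (simp add: cross_def algebra_simps)
  show ?thesis unfolding Delta_def using u dn cr e1 e2
    by (intro CollectI conjI exI[of _ p0] exI[of _ p] exI[of _ m]) auto
qed




lemma ray_lemma:
  assumes vc: "valid_config P" and nd: "norm \<delta> = 1"
    and ang: "\<forall>u\<in>Delta P. dir_angle \<delta> u \<ge> x" and x: "0 \<le> x" "x \<le> pi"
    and p0: "p0 \<in> P" and p: "p \<in> P" and ne: "p0 \<noteq> p" and ord: "(p - p0) \<bullet> \<delta> \<le> 0"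
    and W1: "w \<bullet> \<delta> > 0" and sm: "64*(cross \<delta> w)^2 < (w \<bullet> \<delta>)^2"
    and cw: "cos x * norm w < w \<bullet> \<delta>" and t: "t \<ge> 0"
  shows "dist p (p0 + t *\<^sub>R w) \<ge> 2"
proof -
  define d where "d = p - p0"
  have "dist p0 p \<ge> 2" using vc p0 p ne unfolding valid_config_def by auto
  hence "(dist p0 p)^2 \<ge> 2^2" by (intro power_mono) auto
  hence dd: "d \<bullet> d \<ge> 4" unfolding d_def dist_sq_inner by (simp add: inner_commute inner_diff algebra_simps)
  have dist2: "(dist p (p0 + t *\<^sub>R w))^2 = (d - t *\<^sub>R w) \<bullet> (d - t *\<^sub>R w)"
    unfolding dist_sq_inner d_def by (simp add: algebra_simps)
  have exp: "(d - t *\<^sub>R w) \<bullet> (d - t *\<^sub>R w) = d \<bullet> d - 2*t*(d \<bullet> w) + t*t*(w \<bullet> w)"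
    by (simp add: inner_diff inner_commute algebra_simps)
  have ww: "w \<bullet> w > 0" using W1 by (metis inner_eq_zero_iff inner_zero_left less_irrefl zero_less_norm_iff norm_eq_sqrt_inner real_sqrt_gt_0_iff)
  have goal2: "(dist p (p0 + t *\<^sub>R w))^2 \<ge> 4"
  proof (cases "d \<bullet> w \<le> 0")
    case True
    have "t*t*(w \<bullet> w) \<ge> 0" using t ww by simp
    moreover have "t*(d \<bullet> w) \<le> 0" using t True by (simp add: mult_nonneg_nonpos)
    ultimately show ?thesis using dist2 exp dd by linarith
  next
    case False
    hence dw: "d \<bullet> w > 0" by simp
    have key: "(cross w d)^2 \<ge> 4 * (w \<bullet> w)"
    proof (rule ccontr)
      assume "\<not> ?thesis"
      hence crs: "(cross w d)^2 < 4 * (w \<bullet> w)" by simp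
      define a where "a = d \<bullet> \<delta>"
      define b where "b = cross \<delta> d"
      define V1 where "V1 = w \<bullet> \<delta>"
      define V2 where "V2 = cross \<delta> w"
      have ids: "d \<bullet> w = a*V1 + b*V2" "cross w d = V1*b - V2*a" "d \<bullet> d = a*a+b*b"
        "w \<bullet> w = V1^2 + V2^2"
        using frame_ids(1)[OF nd, of d w] frame_ids(2)[OF nd, of w d] frame_ids(3)[OF nd, of d] frame_ids(3)[OF nd, of w] unfolding a_def b_def V1_def V2_def
        by (simp_all add: power2_eq_square)
      have a0: "a \<le> 0" using ord unfolding a_def d_def .
      have V1p: "V1 > 0" using W1 V1_def by simp
      obtain s where s: "0 \<le> s" "s \<le> 1" "(V1*b - s*V2*a)^2 = 4*(V1^2 + s^2*V2^2)"
        using frame_key[of a b V1 V2] a0 V1p dd dw crs ids by auto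
      have small: "a*a + b*b < 8"
        using frame_small[of a V1 b V2] a0 V1p dw crs ids sm V1_def V2_def by auto
      define z where "z = V1 *\<^sub>R \<delta> + (s*V2) *\<^sub>R perp \<delta>"
      have zd: "z \<bullet> \<delta> = V1" unfolding z_def using perp_ids[OF nd] by (simp add: inner_add_left inner_add_right)
      have zp: "cross \<delta> z = s*V2" unfolding z_def using perp_ids[OF nd]
        by (simp add: cross_def algebra_simps)
      have zz: "z \<bullet> z = V1^2 + s^2*V2^2"
        using frame_ids(3)[OF nd, of z] zd zp by (simp add: power2_eq_square)
      have zc: "cross z d = V1*b - s*V2*a"
        using frame_ids(2)[OF nd, of z d] zd zp unfolding a_def b_def by simp
      have zpos: "z \<bullet> z > 0" using zz V1p by (simp add: add_pos_nonneg)
      define u where "u = (1 / norm z) *\<^sub>R z"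
      have nz: "norm z > 0" using zpos by (simp add: norm_eq_sqrt_inner)
      have nzsq: "(norm z)^2 = z \<bullet> z" by (simp add: power2_norm_eq_inner)
      have nu: "norm u = 1" unfolding u_def using nz by simp
      have cu: "cross u d = cross z d / norm z" unfolding u_def by (simp add: cross_def diff_divide_distrib)
      have c4: "(cross z d)^2 = 4 * (z \<bullet> z)" using s(3) zc zz by simp
      have "(cross u d)^2 = (cross z d)^2 / (z \<bullet> z)" unfolding cu using nzsq by (simp add: power_divide)
      also have "\<dots> = 4" unfolding c4 using zpos by simp
      finally have "(cross u d)^2 = 4" .
      hence "cross u d = 2 \<or> cross u d = -2"
        by (metis power2_eq_square real_sqrt_abs abs_if real_sqrt_four  power2_eq_iff)
      hence "cross u (p - p0) = 2 \<or> cross u (p - p0) = -2" unfolding d_def .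
      moreover have "(dist p0 p)^2 < 8" using small ids(3) unfolding dist_sq_inner d_def
        by (simp add: inner_commute inner_diff algebra_simps)
      ultimately have uD: "u \<in> Delta P" using in_Delta delaunay_close[OF vc p0 p ne] nu by blast
      have ud: "\<delta> \<bullet> u = V1 / norm z" unfolding u_def using zd by (simp add: inner_commute)
      have "z \<bullet> z \<le> w \<bullet> w" using zz ids(4) s(1,2)
        by (simp add: mult_left_le_one_le power_le_one mult_le_cancel_right1 zero_le_power2 mult_right_le_one_le)
      hence nzw: "norm z \<le> norm w" by (simp add: norm_eq_sqrt_inner)
      have "cos x * norm z < V1"
      proof (cases "cos x < 0")
        case True
        hence "cos x * norm z < 0" using nz by (simp add: mult_neg_pos)
        thus ?thesis using V1p by linarith
      next
        case False
        hence "cos x * norm z \<le> cos x * norm w" using nzw by (intro mult_left_mono) auto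
        thus ?thesis using cw V1_def by linarith
      qed
      hence cx: "cos x < \<delta> \<bullet> u" unfolding ud using nz by (simp add: pos_less_divide_eq)
      have "\<delta> \<bullet> u \<le> 1" using nu nd by (metis norm_cauchy_schwarz mult_1_left abs_le_D1 Cauchy_Schwarz_ineq2)
      hence "arccos (\<delta> \<bullet> u) < arccos (cos x)" using cx by (intro arccos_less_arccos) auto
      hence "dir_angle \<delta> u < x" unfolding dir_angle_def using arccos_cos[OF x] by simp
      thus False using ang uD by force
    qed
    have "(cross w (d - t *\<^sub>R w))^2 \<le> (w \<bullet> w) * ((d - t *\<^sub>R w) \<bullet> (d - t *\<^sub>R w))"
      by (rule lagrange_ineq)
    moreover have "cross w (d - t *\<^sub>R w) = cross w d" by (simp add: cross_lin)
    ultimately have "4 * (w \<bullet> w) \<le> (w \<bullet> w) * (dist p (p0 + t *\<^sub>R w))^2" using key dist2 by simp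
    thus ?thesis using ww by (simp add: mult.commute)
  qed
  show ?thesis
  proof (rule ccontr)
    assume "\<not> ?thesis"
    hence "dist p (p0 + t *\<^sub>R w) < 2" by simp
    hence "(dist p (p0 + t *\<^sub>R w))^2 < 2^2" by (intro power_strict_mono) auto
    thus False using goal2 by simp
  qed
qed






lemma sorted_ex1:
  assumes fin: "finite A"
    and tot: "\<And>x y. x \<in> A \<Longrightarrow> y \<in> A \<Longrightarrow> x \<noteq> y \<Longrightarrow> R x y \<or> R y x"
    and tr: "\<And>x y z. R x y \<Longrightarrow> R y z \<Longrightarrow> R x z"
    and irr: "\<And>x. \<not> R x x"
  shows "\<exists>!xs. distinct xs \<and> set xs = A \<and> sorted_wrt R xs"
proof -
  have ex: "\<exists>xs. distinct xs \<and> set xs = B \<and> sorted_wrt R xs" if "B \<subseteq> A" for B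
  proof -
    have "finite B" using fin that finite_subset by blast
    thus ?thesis using that
    proof (induction B rule: finite_induct)
      case empty thus ?case by auto
    next
      case (insert x B)
      then obtain xs where xs: "distinct xs" "set xs = B" "sorted_wrt R xs" by auto
      define ys where "ys = filter (\<lambda>y. R y x) xs"
      define zs where "zs = filter (\<lambda>y. \<not> R y x) xs"
      have s1: "\<forall>y\<in>set ys. R y x" unfolding ys_def by auto
      have s2: "\<forall>z\<in>set zs. R x z"
      proof
        fix z assume z: "z \<in> set zs"
        hence "z \<in> B" "\<not> R z x" unfolding zs_def using xs by auto
        moreover hence "z \<noteq> x" using insert by auto
        ultimately show "R x z" using tot[of x z] insert by auto
      qed
      have "sorted_wrt R (ys @ [x] @ zs)"
        unfolding sorted_wrt_append using s1 s2 xs(3) tr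
        by (auto simp: ys_def zs_def sorted_wrt_filter)
      moreover have "distinct (ys @ [x] @ zs)" using xs insert unfolding ys_def zs_def by auto
      moreover have "set (ys @ [x] @ zs) = insert x B" using xs unfolding ys_def zs_def by auto
      ultimately show ?case by blast
    qed
  qed
  have uniq: "xs = ys" if "distinct xs" "sorted_wrt R xs" "distinct ys" "sorted_wrt R ys"
    "set xs = set ys" for xs ys
    using that
  proof (induction xs arbitrary: ys)
    case Nil thus ?case by simp
  next
    case (Cons a xs)
    then obtain b ys' where ys: "ys = b # ys'" by (cases ys) auto
    have "a = b"
    proof (rule ccontr)
      assume ne: "a \<noteq> b"
      hence "b \<in> set xs" "a \<in> set ys'" using Cons.prems ys by auto
      hence "R a b" "R b a" using Cons.prems ys by auto
      thus False using tr irr by blast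
    qed
    moreover have "set xs = set ys'" using Cons.prems ys \<open>a = b\<close>
      by (metis distinct.simps(2) list.simps(15) Diff_insert_absorb)
    ultimately show ?case using Cons ys by auto
  qed
  show ?thesis using ex[of A] uniq by blast
qed



lemma before_props:
  assumes nd: "norm \<delta> = 1"
  shows "\<And>x y. x \<noteq> y \<Longrightarrow> before \<delta> x y \<or> before \<delta> y x"
    "\<And>x y z. before \<delta> x y \<Longrightarrow> before \<delta> y z \<Longrightarrow> before \<delta> x z"
    "\<And>x. \<not> before \<delta> x x"
proof -
  fix x y :: point assume ne: "x \<noteq> y"
  show "before \<delta> x y \<or> before \<delta> y x"
  proof (rule ccontr)
    assume "\<not> ?thesis"
    hence e: "(x - y) \<bullet> \<delta> = 0" "(x - y) \<bullet> perp \<delta> = 0" unfolding before_def by (auto simp: inner_diff_left)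
    have "cross \<delta> (x - y) = (x - y) \<bullet> perp \<delta>" by (simp add: cross_def perp_def inner_prod_def algebra_simps)
    hence "(x - y) \<bullet> (x - y) = 0" using frame_ids(3)[OF nd, of "x - y"] e by simp
    thus False using ne by simp
  qed
next
  fix x y z assume "before \<delta> x y" "before \<delta> y z"
  thus "before \<delta> x z" unfolding before_def by auto
next
  fix x show "\<not> before \<delta> x x" unfolding before_def by auto
qed

lemma Pi_ord_props:
  assumes nd: "norm \<delta> = 1" and fin: "finite C"
  shows "distinct (Pi_ord \<delta> C) \<and> set (Pi_ord \<delta> C) = C \<and> sorted_wrt (before \<delta>) (Pi_ord \<delta> C)"
proof -
  have "\<exists>!xs. distinct xs \<and> set xs = C \<and> sorted_wrt (before \<delta>) xs"
    by (rule sorted_ex1[OF fin]) (use before_props[OF nd] in blast)+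
  thus ?thesis unfolding Pi_ord_def by (rule theI')
qed



lemma sin_lower: "0 \<le> x \<Longrightarrow> x - x^3/6 \<le> sin (x::real)"
proof -
  assume x: "0 \<le> x"
  have A: "\<bar>sin x - (\<Sum>m<3. sin_coeff m * x ^ m)\<bar> \<le> inverse (fact 3) * \<bar>x\<bar> ^ 3"
    by (rule Maclaurin_sin_bound)
  have B: "(\<Sum>m<3. sin_coeff m * x ^ m) = x"
    by (simp add: sin_coeff_def numeral_3_eq_3 lessThan_Suc)
  have f3: "(fact 3::real) = 6" by (simp add: fact_numeral)
  have C: "inverse (fact 3) * \<bar>x\<bar> ^ 3 = x^3/6" unfolding f3 using x by simp
  have "\<bar>sin x - x\<bar> \<le> x^3/6" using A unfolding B C .
  from abs_le_D2[OF this] show ?thesis by linarith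
qed

lemma angle_bound:
  fixes n :: nat and W1 W2 :: real
  assumes n: "n \<ge> 1" and W1: "W1 > 0" and sm: "8 * real n * \<bar>W2\<bar> < W1"
  shows "cos (pi / (24 * real n)) * sqrt (W1^2 + W2^2) < W1"
proof -
  define x where "x = pi / (24 * real n)"
  have n1: "real n \<ge> 1" using n by simp
  have x0: "0 < x" unfolding x_def using n1 by simp
  have xle: "x \<le> pi/24" unfolding x_def using n1 by (intro divide_left_mono) auto
  have pil: "pi \<le> 3.2" "3.14 \<le> pi" using pi_approx by auto
  have x2: "x^2 \<le> 0.02" 
  proof -
    have "x^2 \<le> (pi/24)^2" using xle x0 by (intro power_mono) auto
    also have "\<dots> \<le> (3.2/24)^2" using pil by (intro power_mono) auto
    finally show ?thesis by (simp add: power2_eq_square)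
  qed
  have "8 * real n * x = pi/3" unfolding x_def using n1 by simp
  have "1 \<le> 8 * real n * (x - x^3/6)"
  proof -
    have "8 * real n * (x - x^3/6) = (8 * real n * x) * (1 - x^2/6)"
      by (simp add: power2_eq_square power3_eq_cube algebra_simps)
    also have "\<dots> = (pi/3) * (1 - x^2/6)" using \<open>8 * real n * x = pi/3\<close> by simp
    also have "\<dots> \<ge> (3.14/3) * (1 - 0.02/6)" using pil x2 by (intro mult_mono) auto
    finally show ?thesis by simp
  qed
  moreover have "8 * real n * (x - x^3/6) \<le> 8 * real n * sin x"
    using sin_lower[of x] x0 by (intro mult_left_mono) auto
  ultimately have s8: "1 \<le> 8 * real n * sin x" by linarith
  have sx: "sin x > 0" using x0 xle pil by (intro sin_gt_zero) auto
  have cx: "0 \<le> cos x" "cos x \<le> 1" using x0 xle pil by (auto intro!: cos_ge_zero)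
  have lt: "cos x * \<bar>W2\<bar> < sin x * W1"
  proof (cases "W2 = 0")
    case True thus ?thesis using sx W1 by simp
  next
    case False
    have "cos x * \<bar>W2\<bar> \<le> \<bar>W2\<bar>" using cx by (simp add: mult_left_le_one_le)
    also have "\<dots> \<le> 8 * real n * sin x * \<bar>W2\<bar>" using mult_right_mono[OF s8 abs_ge_zero[of W2]] by simp
    also have "\<dots> < sin x * W1" using sm sx by (simp add: mult.commute mult.left_commute)
    finally show ?thesis .
  qed
  have "(cos x * \<bar>W2\<bar>)^2 < (sin x * W1)^2"
    using lt cx by (intro power_strict_mono) auto
  hence "(cos x)^2 * W2^2 < (sin x)^2 * W1^2" by (simp add: power_mult_distrib)
  hence h1: "(cos x)^2 * W2^2 < (1 - (cos x)^2) * W1^2" using sin_squared_eq[of x] by simp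
  have e1: "(cos x)^2*(W1^2+W2^2) = (cos x)^2*W2^2 + (cos x)^2*W1^2" by (simp add: algebra_simps)
  have e2: "(1 - (cos x)^2)*W1^2 = W1^2 - (cos x)^2*W1^2" by (simp add: algebra_simps)
  have "(cos x)^2 * (W1^2 + W2^2) < W1^2" using h1 unfolding e1 e2 by (simp add: less_diff_eq)
  hence "(cos x * sqrt (W1^2 + W2^2))^2 < W1^2" by (simp add: power_mult_distrib)
  moreover have "0 \<le> W1" using W1 by simp
  ultimately have "cos x * sqrt (W1^2 + W2^2) < W1" by (rule power_less_imp_less_base)
  thus ?thesis unfolding x_def .
qed






lemma hull_sub:
  "convex hull (D a \<union> D b) \<subseteq> {y. \<exists>z\<in>closed_segment a b. dist y z < 1}"
proof (rule hull_minimal)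
  show "D a \<union> D b \<subseteq> {y. \<exists>z\<in>closed_segment a b. dist y z < 1}"
    unfolding D_def by (auto simp: dist_commute intro: ends_in_segment)
  show "convex {y. \<exists>z\<in>closed_segment a b. dist y z < 1}"
    unfolding convex_def
  proof (intro ballI allI impI)
    fix y1 y2 :: point and u v :: real
    assume y1: "y1 \<in> {y. \<exists>z\<in>closed_segment a b. dist y z < 1}"
      and y2: "y2 \<in> {y. \<exists>z\<in>closed_segment a b. dist y z < 1}"
      and u: "0 \<le> u" and v: "0 \<le> v" and uv: "u + v = 1"
    obtain z1 where z1: "z1 \<in> closed_segment a b" "dist y1 z1 < 1" using y1 by auto
    obtain z2 where z2: "z2 \<in> closed_segment a b" "dist y2 z2 < 1" using y2 by auto
    have zin: "u *\<^sub>R z1 + v *\<^sub>R z2 \<in> closed_segment a b"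
      using convex_closed_segment[of a b] z1(1) z2(1) u v uv unfolding convex_def by blast
    have "dist (u *\<^sub>R y1 + v *\<^sub>R y2) (u *\<^sub>R z1 + v *\<^sub>R z2)
        = norm (u *\<^sub>R (y1 - z1) + v *\<^sub>R (y2 - z2))" by (simp add: dist_norm algebra_simps)
    also have "\<dots> \<le> u * dist y1 z1 + v * dist y2 z2"
      using norm_triangle_ineq[of "u *\<^sub>R (y1 - z1)" "v *\<^sub>R (y2 - z2)"] u v
      by (simp add: dist_norm)
    also have "\<dots> < 1"
    proof (cases "u = 0")
      case True thus ?thesis using uv z2 by simp
    next
      case False
      hence "u * dist y1 z1 < u * 1" using u z1 by (intro mult_strict_left_mono) auto
      moreover have "v * dist y2 z2 \<le> v * 1" using v z2 by (intro mult_left_mono) auto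
      ultimately show ?thesis using uv by linarith
    qed
    finally show "u *\<^sub>R y1 + v *\<^sub>R y2 \<in> {y. \<exists>z\<in>closed_segment a b. dist y z < 1}"
      using zin by blast
  qed
qed

lemma cross_neg_left: "cross (- u) x = - cross u x"
  by (simp add: cross_def)

lemma Delta_neg:
  assumes "u \<in> Delta P" shows "- u \<in> Delta P"
proof -
  obtain s s' a where nu: "norm u = 1" and nb: "delaunay_nb P s s'" and
    c: "(cross u (s - a) = 1 \<and> cross u (s' - a) = -1) \<or> (cross u (s - a) = -1 \<and> cross u (s' - a) = 1)"
    using assms unfolding Delta_def by blast
  have "(cross (-u) (s - a) = 1 \<and> cross (-u) (s' - a) = -1) \<or> (cross (-u) (s - a) = -1 \<and> cross (-u) (s' - a) = 1)"
    using c unfolding cross_neg_left by auto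
  moreover have "norm (-u) = 1" using nu by simp
  ultimately show ?thesis unfolding Delta_def using nb by blast
qed

lemma w_props:
  fixes n :: nat
  assumes nd: "norm \<delta> = 1" and y: "norm y \<le> R" and n: "n \<ge> 1"
    and L: "L = (R + 2) * (1 + 8 * real n)" and w: "w = L *\<^sub>R \<delta> + y"
  shows "w \<bullet> \<delta> > 0" "64*(cross \<delta> w)^2 < (w \<bullet> \<delta>)^2"
    "cos (pi / (24 * real n)) * norm w < w \<bullet> \<delta>"
proof -
  have wd: "w \<bullet> \<delta> = L + y \<bullet> \<delta>" unfolding w using perp_ids(5)[OF nd] by (simp add: inner_add_left)
  have cw: "cross \<delta> w = cross \<delta> y" unfolding w using perp_ids(4)[OF nd] by (simp add: cross_def algebra_simps)
  have b1: "\<bar>y \<bullet> \<delta>\<bar> \<le> R" using Cauchy_Schwarz_ineq2[of y \<delta>] nd y by simp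
  have "cross \<delta> y = y \<bullet> perp \<delta>" by (simp add: cross_def perp_def inner_prod_def algebra_simps)
  moreover have "norm (perp \<delta>) = 1" using perp_ids(6)[OF nd] by (simp add: norm_eq_sqrt_inner)
  ultimately have b2: "\<bar>cross \<delta> y\<bar> \<le> R" using Cauchy_Schwarz_ineq2[of y "perp \<delta>"] y by simp
  have R0: "R \<ge> 0" using y norm_ge_zero[of y] by linarith
  have Le: "L = R + 2 + 8 * real n * R + 16 * real n" unfolding L by (simp add: algebra_simps)
  have "8 * real n * \<bar>cross \<delta> y\<bar> \<le> 8 * real n * R" using b2 by (intro mult_left_mono) auto
  moreover have "8 * real n * R \<ge> 0" using R0 by simp
  moreover have "real n \<ge> 1" using n by simp
  ultimately have key: "8 * real n * \<bar>cross \<delta> w\<bar> < w \<bullet> \<delta>" "w \<bullet> \<delta> > 0"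
    unfolding wd cw Le using b1 by linarith+
  thus "w \<bullet> \<delta> > 0" by simp
  have "8 * \<bar>cross \<delta> w\<bar> \<le> 8 * real n * \<bar>cross \<delta> w\<bar>"
    using n mult_right_mono[of 8 "8 * real n" "\<bar>cross \<delta> w\<bar>"] by simp
  hence "8 * \<bar>cross \<delta> w\<bar> < w \<bullet> \<delta>" using key by linarith
  hence "(8 * \<bar>cross \<delta> w\<bar>)^2 < (w \<bullet> \<delta>)^2" by (intro power_strict_mono) auto
  thus "64*(cross \<delta> w)^2 < (w \<bullet> \<delta>)^2" by (simp add: power_mult_distrib)
  have "w \<bullet> w = (w \<bullet> \<delta>)^2 + (cross \<delta> w)^2" using frame_ids(3)[OF nd, of w] by (simp add: power2_eq_square)
  hence "norm w = sqrt ((w \<bullet> \<delta>)^2 + (cross \<delta> w)^2)" by (simp add: norm_eq_sqrt_inner)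
  thus "cos (pi / (24 * real n)) * norm w < w \<bullet> \<delta>" using angle_bound[OF n key(2) key(1)] by simp
qed




theorem mainTheorem6:
  fixes S T :: "point set" and n :: nat and \<delta> :: point
  assumes "valid_config S" and "valid_config T"
    and "card S = n" and "card T = n" and "n \<ge> 2"
    and "sed_center S 0" and "sed_center T 0"
    and "norm \<delta> = 1"
    and "\<forall>u \<in> Delta S \<union> Delta T. dir_angle \<delta> u \<ge> pi / (24 * real n)"
  shows "valid_translation S (M_delta \<delta> S T) (((rad S + rad T + 2) * (1 + 8 * real n)) *\<^sub>R \<delta>)
       \<and> valid_itinerary (M_delta \<delta> S T) (((rad S + rad T + 2) * (1 + 8 * real n)) *\<^sub>R \<delta>)
            (Pi_ord \<delta> S)"
proof -
  note vS = assms(1) and vT = assms(2) and nd = assms(8)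
  define R where "R = rad S + rad T"
  define L where "L = (R + 2) * (1 + 8 * real n)"
  define v where "v = L *\<^sub>R \<delta>"
  define x where "x = pi / (24 * real n)"
  define ss where "ss = Pi_ord \<delta> S"
  define tt where "tt = Pi_ord \<delta> T"
  have finS: "finite S" using vS unfolding valid_config_def by simp
  have finT: "finite T" using vT unfolding valid_config_def by simp
  have PS: "distinct ss" "set ss = S" "sorted_wrt (before \<delta>) ss"
    using Pi_ord_props[OF nd finS] unfolding ss_def by auto
  have PT: "distinct tt" "set tt = T" "sorted_wrt (before \<delta>) tt"
    using Pi_ord_props[OF nd finT] unfolding tt_def by auto
  have lss: "length ss = n" using distinct_card[OF PS(1)] PS(2) assms(3) by simp
  have ltt: "length tt = n" using distinct_card[OF PT(1)] PT(2) assms(4) by simp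
  have M: "M_delta \<delta> S T (ss ! i) = tt ! i" if "i < n" for i
  proof -
    have "(THE j. j < length ss \<and> ss ! j = ss ! i) = i"
      using that lss PS(1) by (intro the_equality) (auto simp: nth_eq_iff_index_eq)
    thus ?thesis unfolding M_delta_def ss_def[symmetric] tt_def[symmetric] by simp
  qed
  have normS: "norm s \<le> rad S" if "s \<in> S" for s
    using assms(6) that unfolding sed_center_def by (auto simp: dist_norm)
  have normT: "norm t \<le> rad T" if "t \<in> T" for t
    using assms(7) that unfolding sed_center_def by (auto simp: dist_norm)
  have x: "0 \<le> x" "x \<le> pi" unfolding x_def using assms(5)
    by (auto intro!: divide_nonneg_pos simp: divide_le_eq) 
  have angS: "\<forall>u\<in>Delta S. dir_angle \<delta> u \<ge> x" using assms(9) unfolding x_def by auto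
  have angT: "\<forall>u\<in>Delta T. dir_angle (-\<delta>) u \<ge> x"
  proof
    fix u assume "u \<in> Delta T"
    hence "-u \<in> Delta T" by (rule Delta_neg)
    hence "dir_angle \<delta> (-u) \<ge> x" using assms(9) unfolding x_def by auto
    thus "dir_angle (-\<delta>) u \<ge> x" unfolding dir_angle_def by simp
  qed
  have n1: "n \<ge> 1" using assms(5) by simp
  have wp: "w \<bullet> \<delta> > 0 \<and> 64*(cross \<delta> w)^2 < (w \<bullet> \<delta>)^2 \<and> cos x * norm w < w \<bullet> \<delta>"
    if "i < n" and w: "w = tt ! i + v - ss ! i" for i w
  proof -
    have si: "ss ! i \<in> S" using PS(2) lss that by auto
    have ti: "tt ! i \<in> T" using PT(2) ltt that by auto
    have "norm (tt ! i - ss ! i) \<le> norm (tt ! i) + norm (ss ! i)" by (rule norm_triangle_ineq4)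
    hence ny: "norm (tt ! i - ss ! i) \<le> R" using normS[OF si] normT[OF ti] unfolding R_def by linarith
    have w': "w = L *\<^sub>R \<delta> + (tt ! i - ss ! i)" unfolding w v_def by simp
    show ?thesis using w_props[OF nd ny n1 L_def w'] unfolding x_def by auto
  qed
  have itin: "valid_itinerary (M_delta \<delta> S T) v ss"
    unfolding valid_itinerary_def lss
  proof (intro allI impI conjI)
    fix i j assume i: "i < n" and j: "j < n"
    define w where "w = tt ! i + v - ss ! i"
    have W: "w \<bullet> \<delta> > 0" "64*(cross \<delta> w)^2 < (w \<bullet> \<delta>)^2" "cos x * norm w < w \<bullet> \<delta>"
      using wp[OF i w_def] by auto
    note hs = hull_sub[of "ss ! i" "tt ! i + v"]
    {
      assume ij: "i < j"
      show "convex hull (D (ss ! i) \<union> D (M_delta \<delta> S T (ss ! i) + v)) \<inter> D (ss ! j) = {}"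
      proof (rule ccontr)
        assume "\<not> ?thesis"
        then obtain y where y1: "y \<in> convex hull (D (ss ! i) \<union> D (tt ! i + v))"
          and y2: "y \<in> D (ss ! j)" using M[OF i] by auto
        obtain z where z: "z \<in> closed_segment (ss ! i) (tt ! i + v)" "dist y z < 1"
          using hs y1 by auto
        obtain u where u: "0 \<le> u" "u \<le> 1" "z = (1 - u) *\<^sub>R ss ! i + u *\<^sub>R (tt ! i + v)"
          using z(1) unfolding closed_segment_def by auto
        have zz: "z = ss ! i + u *\<^sub>R w" unfolding u(3) w_def by (simp add: algebra_simps)
        have bf: "before \<delta> (ss ! i) (ss ! j)" using sorted_wrt_nth_less[OF PS(3) ij] j lss by simp
        have ord: "(ss ! j - ss ! i) \<bullet> \<delta> \<le> 0" using bf unfolding before_def by (auto simp: inner_diff_left)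
        have ne: "ss ! i \<noteq> ss ! j" using PS(1) ij j lss by (simp add: nth_eq_iff_index_eq)
        have "dist (ss ! j) (ss ! i + u *\<^sub>R w) \<ge> 2"
          using ray_lemma[OF vS nd angS x _ _ ne ord W(1,2,3) u(1)] PS(2) i j lss by auto
        moreover have "dist (ss ! j) y < 1" using y2 unfolding D_def by simp
        ultimately show False using z(2) zz dist_triangle[of "ss ! j" z y] by simp
      qed
    }
    {
      assume ji: "j < i"
      show "convex hull (D (ss ! i) \<union> D (M_delta \<delta> S T (ss ! i) + v)) \<inter> D (M_delta \<delta> S T (ss ! j) + v) = {}"
      proof (rule ccontr)
        assume "\<not> ?thesis"
        then obtain y where y1: "y \<in> convex hull (D (ss ! i) \<union> D (tt ! i + v))"
          and y2: "y \<in> D (tt ! j + v)" using M[OF i] M[OF j] by auto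
        obtain z where z: "z \<in> closed_segment (ss ! i) (tt ! i + v)" "dist y z < 1"
          using hs y1 by auto
        obtain u where u: "0 \<le> u" "u \<le> 1" "z = (1 - u) *\<^sub>R ss ! i + u *\<^sub>R (tt ! i + v)"
          using z(1) unfolding closed_segment_def by auto
        have zz: "z = v + (tt ! i + (1 - u) *\<^sub>R (- w))" unfolding u(3) w_def by (simp add: algebra_simps)
        have bf: "before \<delta> (tt ! j) (tt ! i)" using sorted_wrt_nth_less[OF PT(3) ji] i ltt by simp
        have ord: "(tt ! j - tt ! i) \<bullet> (-\<delta>) \<le> 0" using bf unfolding before_def by (auto simp: inner_diff_left)
        have ne: "tt ! i \<noteq> tt ! j" using PT(1) ji i ltt by (simp add: nth_eq_iff_index_eq)
        have nd': "norm (-\<delta>) = 1" using nd by simp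
        have W': "(-w) \<bullet> (-\<delta>) > 0" "64*(cross (-\<delta>) (-w))^2 < ((-w) \<bullet> (-\<delta>))^2"
          "cos x * norm (-w) < (-w) \<bullet> (-\<delta>)" using W by (simp_all add: cross_def)
        have "dist (tt ! j) (tt ! i + (1 - u) *\<^sub>R (- w)) \<ge> 2"
          using ray_lemma[OF vT nd' angT x _ _ ne ord W'(1,2,3)] u(2) PT(2) i j ltt by auto
        hence "dist (tt ! j + v) z \<ge> 2" unfolding zz
          by (metis add.commute dist_add_cancel)
        moreover have "dist (tt ! j + v) y < 1" using y2 unfolding D_def by simp
        ultimately show False using z(2) dist_triangle[of "tt ! j + v" z y] by simp
      qed
    }
  qed
  have vv: "((rad S + rad T + 2) * (1 + 8 * real n)) *\<^sub>R \<delta> = v" unfolding v_def L_def R_def by simp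
  show ?thesis unfolding vv ss_def[symmetric] valid_translation_def using itin PS(1,2) by blast
qed


end
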